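(* Let $(X,d)$ be a compact metric space and $\mathcal{W}$ a uniformly bounded open cover of $X$. If $U$ is an open subset of $X$, then $P_U$ is open in $\mathrm{Viet}^{\mathrm{m}}(\mathcal{W})$. If $\mathcal{U}=\{U_1,\dots,U_n\}$ is a collection of open subsets of $X$, then $P_{\mathcal{U}}$ is open in $\mathrm{Viet}^{\mathrm{m}}(\mathcal{W})$.
   Context: $\mathrm{Viet}^{\mathrm{m}}(\mathcal{W})$ is the set of finitely supported probability measures on $X$ whose support is contained in some element of $\mathcal{W}$, with the $1$-Wasserstein metric. For $U\subseteq X$, $P_U=\{\mu\in\mathrm{Viet}^{\mathrm{m}}(\mathcal{W}) : \mathrm{supp}(\mu)\cap U\neq\varnothing\}$, and for a finite collection $\mathcal{U}=\{U_1,\dots,U_n\}$, $P_{\mathcal{U}}=\bigcap_{i=1}^nP_{U_i}$. *)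

theory Defs
  imports "HOL-Analysis.Analysis"
begin

text \<open>Finitely supported probability measures on a set X of a metric space are
represented by their mass functions.\<close>

definition fsupp :: "('b \<Rightarrow> real) \<Rightarrow> 'b set" where
  "fsupp f = {x. f x \<noteq> 0}"

definition fprob :: "'a set \<Rightarrow> ('a \<Rightarrow> real) \<Rightarrow> bool" where
  "fprob X \<mu> \<longleftrightarrow> (\<forall>x. \<mu> x \<ge> 0) \<and> finite (fsupp \<mu>) \<and> fsupp \<mu> \<subseteq> X
      \<and> sum \<mu> (fsupp \<mu>) = 1"

definition coupling :: "('a \<Rightarrow> real) \<Rightarrow> ('a \<Rightarrow> real) \<Rightarrow> ('a \<times> 'a \<Rightarrow> real) \<Rightarrow> bool" where
  "coupling \<mu> \<nu> \<pi> \<longleftrightarrow> (\<forall>p. \<pi> p \<ge> 0) \<and> fsupp \<pi> \<subseteq> fsupp \<mu> \<times> fsupp \<nu>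
      \<and> (\<forall>x. (\<Sum>y\<in>fsupp \<nu>. \<pi> (x, y)) = \<mu> x)
      \<and> (\<forall>y. (\<Sum>x\<in>fsupp \<mu>. \<pi> (x, y)) = \<nu> y)"

definition wasserstein1 :: "('a::metric_space \<Rightarrow> real) \<Rightarrow> ('a \<Rightarrow> real) \<Rightarrow> real" where
  "wasserstein1 \<mu> \<nu> = Inf {(\<Sum>p\<in>fsupp \<pi>. \<pi> p * dist (fst p) (snd p)) | \<pi>. coupling \<mu> \<nu> \<pi>}"

definition viet_m :: "'a set \<Rightarrow> 'a set set \<Rightarrow> ('a \<Rightarrow> real) set" where
  "viet_m X \<W> = {\<mu>. fprob X \<mu> \<and> (\<exists>w\<in>\<W>. fsupp \<mu> \<subseteq> w)}"

definition P_set :: "'a set \<Rightarrow> 'a set set \<Rightarrow> 'a set \<Rightarrow> ('a \<Rightarrow> real) set" where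
  "P_set X \<W> U = {\<mu> \<in> viet_m X \<W>. fsupp \<mu> \<inter> U \<noteq> {}}"

definition P_coll :: "'a set \<Rightarrow> 'a set set \<Rightarrow> 'a set set \<Rightarrow> ('a \<Rightarrow> real) set" where
  "P_coll X \<W> \<U> = viet_m X \<W> \<inter> (\<Inter>U\<in>\<U>. P_set X \<W> U)"

definition viet_open :: "'a::metric_space set \<Rightarrow> 'a set set \<Rightarrow> ('a \<Rightarrow> real) set \<Rightarrow> bool" where
  "viet_open X \<W> A \<longleftrightarrow> A \<subseteq> viet_m X \<W> \<and>
     (\<forall>\<mu>\<in>A. \<exists>e>0. \<forall>\<nu>\<in>viet_m X \<W>. wasserstein1 \<mu> \<nu> < e \<longrightarrow> \<nu> \<in> A)"

end

theory Submission
  imports Defs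
begin

lemma coupling_nonempty:
  assumes "fprob X \<mu>" "fprob X \<nu>"
  shows "coupling \<mu> \<nu> (\<lambda>p. \<mu> (fst p) * \<nu> (snd p))"
proof -
  have s1: "sum \<nu> (fsupp \<nu>) = 1" "sum \<mu> (fsupp \<mu>) = 1" using assms by (auto simp: fprob_def)
  have a: "(\<Sum>y\<in>fsupp \<nu>. \<mu> x * \<nu> y) = \<mu> x" for x
    using s1 by (simp add: sum_distrib_left[symmetric])
  have b: "(\<Sum>x\<in>fsupp \<mu>. \<mu> x * \<nu> y) = \<nu> y" for y
    using s1 by (simp add: sum_distrib_right[symmetric])
  show ?thesis using assms a b unfolding coupling_def fprob_def fsupp_def
    by auto
qed

lemma cost_lower:
  assumes "coupling \<mu> \<nu> \<pi>" "fprob X \<mu>" "fprob X \<nu>" "x0 \<in> fsupp \<mu>" "r > 0"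
    and far: "\<forall>y\<in>fsupp \<nu>. dist x0 y \<ge> r"
  shows "\<mu> x0 * r \<le> (\<Sum>p\<in>fsupp \<pi>. \<pi> p * dist (fst p) (snd p))"
proof -
  have fin: "finite (fsupp \<mu>)" "finite (fsupp \<nu>)" using assms by (auto simp: fprob_def)
  have pos: "\<pi> p \<ge> 0" for p using assms(1) unfolding coupling_def by blast
  have sub: "fsupp \<pi> \<subseteq> fsupp \<mu> \<times> fsupp \<nu>" using assms(1) by (auto simp: coupling_def)
  have marg: "(\<Sum>y\<in>fsupp \<nu>. \<pi> (x0, y)) = \<mu> x0" using assms(1) by (auto simp: coupling_def)
  have "(\<Sum>p\<in>fsupp \<pi>. \<pi> p * dist (fst p) (snd p))
      = (\<Sum>p\<in>fsupp \<mu> \<times> fsupp \<nu>. \<pi> p * dist (fst p) (snd p))"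
    by (rule sum.mono_neutral_left) (use fin sub in \<open>auto simp: fsupp_def\<close>)
  also have "\<dots> \<ge> (\<Sum>p\<in>{x0} \<times> fsupp \<nu>. \<pi> p * dist (fst p) (snd p))"
    by (rule sum_mono2) (use fin assms(4) pos in auto)
  also have "(\<Sum>p\<in>{x0} \<times> fsupp \<nu>. \<pi> p * dist (fst p) (snd p))
      = (\<Sum>y\<in>fsupp \<nu>. \<pi> (x0, y) * dist x0 y)"
  proof -
    have "{x0} \<times> fsupp \<nu> = Pair x0 ` fsupp \<nu>" by auto
    then show ?thesis by (simp add: sum.reindex inj_on_def)
  qed
  also have "\<dots> \<ge> (\<Sum>y\<in>fsupp \<nu>. \<pi> (x0, y) * r)"
    by (rule sum_mono) (use far pos in \<open>auto intro: mult_left_mono\<close>)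
  also have "(\<Sum>y\<in>fsupp \<nu>. \<pi> (x0, y) * r) = \<mu> x0 * r"
    using marg by (simp add: sum_distrib_right[symmetric])
  finally show ?thesis by linarith
qed

lemma key:
  assumes U: "openin (top_of_set X) U" and m: "\<mu> \<in> P_set X \<W> U"
  shows "\<exists>e>0. \<forall>\<nu>\<in>viet_m X \<W>. wasserstein1 \<mu> \<nu> < e \<longrightarrow> \<nu> \<in> P_set X \<W> U"
proof -
  have fm: "fprob X \<mu>" using m by (auto simp: P_set_def viet_m_def)
  obtain x0 where x0: "x0 \<in> fsupp \<mu>" "x0 \<in> U" using m by (auto simp: P_set_def)
  have mpos: "\<mu> x0 > 0" using fm x0 unfolding fprob_def fsupp_def
    by (metis less_eq_real_def mem_Collect_eq)
  obtain r where r: "r > 0" "\<forall>x'\<in>X. dist x' x0 < r \<longrightarrow> x' \<in> U"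
    using U x0 unfolding openin_euclidean_subtopology_iff by blast
  show ?thesis
  proof (intro exI[of _ "\<mu> x0 * r"] conjI ballI impI)
    show "\<mu> x0 * r > 0" using mpos r by simp
    fix \<nu> assume nv: "\<nu> \<in> viet_m X \<W>" and w: "wasserstein1 \<mu> \<nu> < \<mu> x0 * r"
    have fn: "fprob X \<nu>" using nv by (auto simp: viet_m_def)
    show "\<nu> \<in> P_set X \<W> U"
    proof (rule ccontr)
      assume "\<nu> \<notin> P_set X \<W> U"
      then have dis: "fsupp \<nu> \<inter> U = {}" using nv by (auto simp: P_set_def)
      have far: "\<forall>y\<in>fsupp \<nu>. dist x0 y \<ge> r"
        using dis r fn unfolding fprob_def by (metis disjoint_iff dist_commute not_le subsetD)
      have "\<mu> x0 * r \<le> wasserstein1 \<mu> \<nu>"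
        unfolding wasserstein1_def
        apply (rule cInf_greatest)
        using coupling_nonempty[OF fm fn] apply blast
        using cost_lower[OF _ fm fn x0(1) r(1) far] by blast
      with w show False by linarith
    qed
  qed
qed

theorem proposition4p5:
  fixes X :: "'a::metric_space set" and \<W> :: "'a set set"
  assumes "compact X"
    and "\<forall>w\<in>\<W>. openin (top_of_set X) w"
    and "\<Union>\<W> = X"
    and "\<exists>B. \<forall>w\<in>\<W>. \<forall>x\<in>w. \<forall>y\<in>w. dist x y \<le> B"
  shows "(\<forall>U. openin (top_of_set X) U \<longrightarrow> viet_open X \<W> (P_set X \<W> U))
    \<and> (\<forall>\<U>. finite \<U> \<and> (\<forall>U\<in>\<U>. openin (top_of_set X) U) \<longrightarrow> viet_open X \<W> (P_coll X \<W> \<U>))"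
proof (intro conjI allI impI)
  fix U assume "openin (top_of_set X) U"
  then show "viet_open X \<W> (P_set X \<W> U)"
    using key[of X U _ \<W>] unfolding viet_open_def by (auto simp: P_set_def)
next
  fix \<U> assume h: "finite \<U> \<and> (\<forall>U\<in>\<U>. openin (top_of_set X) U)"
  show "viet_open X \<W> (P_coll X \<W> \<U>)"
    unfolding viet_open_def
  proof (intro conjI ballI)
    show "P_coll X \<W> \<U> \<subseteq> viet_m X \<W>" by (auto simp: P_coll_def)
    fix \<mu> assume m: "\<mu> \<in> P_coll X \<W> \<U>"
    have "\<forall>U\<in>\<U>. \<exists>e>0. \<forall>\<nu>\<in>viet_m X \<W>. wasserstein1 \<mu> \<nu> < e \<longrightarrow> \<nu> \<in> P_set X \<W> U"
      using key[of X _ \<mu> \<W>] h m by (simp add: P_coll_def)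
    then obtain E where E: "\<forall>U\<in>\<U>. E U > 0 \<and> (\<forall>\<nu>\<in>viet_m X \<W>. wasserstein1 \<mu> \<nu> < E U \<longrightarrow> \<nu> \<in> P_set X \<W> U)"
      by metis
    define e where "e = Min (insert 1 (E ` \<U>))"
    have fin: "finite (insert 1 (E ` \<U>))" using h by auto
    have epos: "e > 0" unfolding e_def using fin E by (subst Min_gr_iff) auto
    have ele: "e \<le> E U" if "U \<in> \<U>" for U unfolding e_def using fin that by auto
    show "\<exists>e>0. \<forall>\<nu>\<in>viet_m X \<W>. wasserstein1 \<mu> \<nu> < e \<longrightarrow> \<nu> \<in> P_coll X \<W> \<U>"
    proof (intro exI[of _ e] conjI ballI impI epos)
      fix \<nu> assume "\<nu> \<in> viet_m X \<W>" "wasserstein1 \<mu> \<nu> < e"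
      then show "\<nu> \<in> P_coll X \<W> \<U>" using E ele unfolding P_coll_def
        by (fastforce)
    qed
  qed
qed

end
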